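(* Let $X$ be an $n$-dimensional real Banach space and let $A \subset X$ be a bounded set not containing the zero vector, such that for every non-zero $x \in X$ there exists $r_x > 0$ with $r_x x \in A$. Then: (i) every ball-covering of $A$ contains at least $n+1$ balls; (ii) if, in addition, $X$ is smooth and $d(0, A) > 0$, then $A$ admits a ball-covering consisting of $n+1$ balls.
   Context: A ball-covering of a set $A \subset X$ is a collection of open balls $B(c, r) = \{ z : \|c - z\| < r\}$, none containing the zero vector (i.e. $0 < r \le \|c\|$), whose union contains $A$. $X$ is smooth if every non-zero $x \in X$ has a unique $f \in S_{X^*}$ with $f(x) = \|x\|$. $d(0,A) = \inf\{\|a\|: a \in A\}$. *)

theory Defs
  imports "HOL-Analysis.Analysis"
begin

definition ball_covering :: "'a::real_normed_vector set set \<Rightarrow> 'a set \<Rightarrow> bool" where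
  "ball_covering \<B> A \<longleftrightarrow>
     (\<forall>B\<in>\<B>. \<exists>c r. B = ball c r \<and> 0 < r \<and> r \<le> norm c) \<and> A \<subseteq> \<Union>\<B>"

definition smooth_space :: "'a::real_normed_vector itself \<Rightarrow> bool" where
  "smooth_space _ \<longleftrightarrow>
     (\<forall>x::'a. x \<noteq> 0 \<longrightarrow> (\<exists>!f :: 'a \<Rightarrow>\<^sub>L real. norm f = 1 \<and> blinfun_apply f x = norm x))"

definition dist0 :: "'a::real_normed_vector set \<Rightarrow> real" where
  "dist0 A = (INF a\<in>A. norm a)"

end

theory Submission
  imports Defs
begin


definition lin_on :: "('a::real_vector \<Rightarrow> real) \<Rightarrow> 'a set \<Rightarrow> bool" where
  "lin_on f S \<longleftrightarrow> (\<forall>x\<in>S. \<forall>y\<in>S. f (x + y) = f x + f y) \<and> (\<forall>x\<in>S. \<forall>r. f (r *\<^sub>R x) = r * f x)"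

lemma hb_ext:
  fixes p :: "'a::real_vector \<Rightarrow> real" and S :: "'a set"
  assumes sub: "\<And>x y. p (x + y) \<le> p x + p y"
    and hom: "\<And>x r. r \<ge> 0 \<Longrightarrow> p (r *\<^sub>R x) = r * p x"
    and S: "subspace S" and lin: "lin_on f S" and le: "\<forall>x\<in>S. f x \<le> p x"
  shows "\<exists>g. lin_on g (span (insert b S)) \<and> (\<forall>x\<in>span (insert b S). g x \<le> p x) \<and> (\<forall>x\<in>S. g x = f x)"
proof (cases "b \<in> S")
  case True
  have "span (insert b S) = S"
    using True S by (metis span_eq_iff span_redundant span_base)
  then show ?thesis using lin le by auto
next
  case False
  have add: "\<And>x y. x \<in> S \<Longrightarrow> y \<in> S \<Longrightarrow> f (x + y) = f x + f y"
    and sc: "\<And>x r. x \<in> S \<Longrightarrow> f (r *\<^sub>R x) = r * f x" using lin by (auto simp: lin_on_def)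
  have spS: "span S = S" using S by (simp add: span_eq_iff)
  have z: "0 \<in> S" using S by (simp add: subspace_0)
  have bnd: "f m1 - p (m1 - b) \<le> p (m2 + b) - f m2" if "m1 \<in> S" "m2 \<in> S" for m1 m2
  proof -
    have "f m1 + f m2 = f (m1 + m2)" using add that by simp
    also have "\<dots> \<le> p (m1 + m2)" using le that S by (simp add: subspace_add)
    also have "m1 + m2 = (m1 - b) + (m2 + b)" by simp
    also have "p \<dots> \<le> p (m1 - b) + p (m2 + b)" by (rule sub)
    finally show ?thesis by simp
  qed
  define L where "L = (\<lambda>m. f m - p (m - b)) ` S"
  define a where "a = Sup L"
  have bddL: "bdd_above L" unfolding L_def bdd_above_def using bnd[OF _ z] by blast
  have aL: "f m - p (m - b) \<le> a" if "m \<in> S" for m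
    unfolding a_def by (rule cSup_upper[OF _ bddL]) (use that L_def in auto)
  have aU: "a \<le> p (m + b) - f m" if "m \<in> S" for m
    unfolding a_def using z bnd that by (intro cSup_least) (auto simp: L_def)
  have uniq: "t = t'" if "x - t *\<^sub>R b \<in> S" "x - t' *\<^sub>R b \<in> S" for x t t'
  proof (rule ccontr)
    assume ne: "t \<noteq> t'"
    have "(t' - t) *\<^sub>R b = (x - t *\<^sub>R b) - (x - t' *\<^sub>R b)" by (simp add: algebra_simps)
    then have "(t' - t) *\<^sub>R b \<in> S" using that S subspace_diff by metis
    then have "inverse (t' - t) *\<^sub>R ((t' - t) *\<^sub>R b) \<in> S" using S subspace_scale by blast
    then have "b \<in> S" using ne by simp
    then show False using False by simp
  qed
  have ex: "\<exists>t. x - t *\<^sub>R b \<in> S" if "x \<in> span (insert b S)" for x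
    using that unfolding span_breakdown_eq spS by blast
  define \<tau> where "\<tau> x = (SOME t. x - t *\<^sub>R b \<in> S)" for x
  have \<tau>: "x - \<tau> x *\<^sub>R b \<in> S" if "x \<in> span (insert b S)" for x
    unfolding \<tau>_def using ex[OF that] by (rule someI_ex)
  have \<tau>eq: "\<tau> x = t" if "x - t *\<^sub>R b \<in> S" for x t
  proof -
    have "x \<in> span (insert b S)" unfolding span_breakdown_eq spS using that by blast
    then show ?thesis using uniq \<tau> that by blast
  qed
  define g where "g x = f (x - \<tau> x *\<^sub>R b) + \<tau> x * a" for x
  let ?V = "span (insert b S)"
  have "lin_on g ?V"
    unfolding lin_on_def
  proof safe
    fix x y assume x: "x \<in> ?V" and y: "y \<in> ?V"
    have e: "(x + y) - (\<tau> x + \<tau> y) *\<^sub>R b = (x - \<tau> x *\<^sub>R b) + (y - \<tau> y *\<^sub>R b)"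
      by (simp add: algebra_simps)
    have "(x + y) - (\<tau> x + \<tau> y) *\<^sub>R b \<in> S" unfolding e using \<tau>[OF x] \<tau>[OF y] S by (simp add: subspace_add)
    then have t: "\<tau> (x + y) = \<tau> x + \<tau> y" by (rule \<tau>eq)
    show "g (x + y) = g x + g y"
      unfolding g_def t e using add[OF \<tau>[OF x] \<tau>[OF y]] by (simp add: algebra_simps)
  next
    fix x r assume x: "x \<in> ?V"
    have e: "r *\<^sub>R x - (r * \<tau> x) *\<^sub>R b = r *\<^sub>R (x - \<tau> x *\<^sub>R b)"
      by (simp add: algebra_simps)
    have "r *\<^sub>R x - (r * \<tau> x) *\<^sub>R b \<in> S" unfolding e using \<tau>[OF x] S by (simp add: subspace_scale)
    then have t: "\<tau> (r *\<^sub>R x) = r * \<tau> x" by (rule \<tau>eq)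
    show "g (r *\<^sub>R x) = r * g x"
      unfolding g_def t e using sc[OF \<tau>[OF x]] by (simp add: algebra_simps)
  qed
  moreover have "g x \<le> p x" if x: "x \<in> ?V" for x
  proof -
    define m where "m = x - \<tau> x *\<^sub>R b"
    define t where "t = \<tau> x"
    have m: "m \<in> S" unfolding m_def using \<tau>[OF x] .
    have xe: "x = m + t *\<^sub>R b" unfolding m_def t_def by simp
    have gx: "g x = f m + t * a" unfolding g_def m_def t_def by simp
    consider "t > 0" | "t < 0" | "t = 0" by linarith
    then show ?thesis
    proof cases
      case 1
      have mi: "inverse t *\<^sub>R m \<in> S" using m S by (simp add: subspace_scale)
      have "a \<le> p (inverse t *\<^sub>R m + b) - f (inverse t *\<^sub>R m)" by (rule aU[OF mi])
      then have "t * a \<le> t * p (inverse t *\<^sub>R m + b) - t * f (inverse t *\<^sub>R m)"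
        using 1 by (simp add: right_diff_distrib[symmetric])
      also have "t * p (inverse t *\<^sub>R m + b) = p (t *\<^sub>R (inverse t *\<^sub>R m + b))"
        using hom[of t] 1 by simp
      also have "t *\<^sub>R (inverse t *\<^sub>R m + b) = m + t *\<^sub>R b" using 1 by (simp add: algebra_simps)
      also have "t * f (inverse t *\<^sub>R m) = f m" using sc[OF m, of "inverse t"] 1 by simp
      finally show ?thesis using gx xe by simp
    next
      case 2
      define s where "s = - t"
      have s: "s > 0" using 2 s_def by simp
      have mi: "inverse s *\<^sub>R m \<in> S" using m S by (simp add: subspace_scale)
      have "f (inverse s *\<^sub>R m) - p (inverse s *\<^sub>R m - b) \<le> a" by (rule aL[OF mi])
      then have "s * f (inverse s *\<^sub>R m) - s * p (inverse s *\<^sub>R m - b) \<le> s * a"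
        using s by (simp add: right_diff_distrib[symmetric])
      also have "s * p (inverse s *\<^sub>R m - b) = p (s *\<^sub>R (inverse s *\<^sub>R m - b))"
        using hom[of s] s by simp
      also have "s *\<^sub>R (inverse s *\<^sub>R m - b) = m + t *\<^sub>R b" using s s_def by (simp add: algebra_simps)
      also have "s * f (inverse s *\<^sub>R m) = f m" using sc[OF m, of "inverse s"] s by simp
      finally show ?thesis using gx xe s_def by simp
    next
      case 3
      then show ?thesis using gx xe le m by simp
    qed
  qed
  moreover have "g x = f x" if "x \<in> S" for x
  proof -
    have "\<tau> x = 0" using that by (intro \<tau>eq) simp
    then show ?thesis by (simp add: g_def)
  qed
  ultimately show ?thesis by blast
qed

lemma hb_base:
  fixes p :: "'a::real_vector \<Rightarrow> real"
  assumes hom: "\<And>x r. r \<ge> 0 \<Longrightarrow> p (r *\<^sub>R x) = r * p x"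
    and c: "c \<noteq> 0" and a1: "\<alpha> \<le> p c" and a2: "- \<alpha> \<le> p (- c)"
  shows "\<exists>f. lin_on f (span {c}) \<and> (\<forall>x\<in>span {c}. f x \<le> p x) \<and> f c = \<alpha>"
proof -
  define f where "f x = (SOME t. x = t *\<^sub>R c) * \<alpha>" for x
  have fe: "f (t *\<^sub>R c) = t * \<alpha>" for t
  proof -
    have "(SOME s. t *\<^sub>R c = s *\<^sub>R c) = t"
      by (rule some_equality) (use c in auto)
    then show ?thesis by (simp add: f_def)
  qed
  have sp: "span {c} = range (\<lambda>t. t *\<^sub>R c)" by (simp add: span_singleton)
  have "lin_on f (span {c})"
    unfolding lin_on_def sp
    by (auto simp: fe scaleR_add_left[symmetric] distrib_right simp del: scaleR_add_left)
  moreover have "f x \<le> p x" if xs: "x \<in> span {c}" for x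
  proof -
    obtain t where x: "x = t *\<^sub>R c" using xs sp by auto
    show ?thesis
    proof (cases "t \<ge> 0")
      case True
      then show ?thesis using x fe hom[OF True, of c] a1 by (simp add: mult_left_mono)
    next
      case False
      then have "t *\<^sub>R c = (- t) *\<^sub>R (- c)" by simp
      then have "p x = (- t) * p (- c)" using x hom[of "- t" "- c"] False by simp
      moreover have "(- t) * (- \<alpha>) \<le> (- t) * p (- c)" using False mult_left_mono[OF a2, of "- t"] by linarith
      ultimately show ?thesis using x fe by simp
    qed
  qed
  moreover have "f c = \<alpha>" using fe[of 1] by simp
  ultimately show ?thesis by blast
qed

lemma span_insert_span: "span (insert b (span X)) = span (insert b X)"
proof
  show "span (insert b (span X)) \<subseteq> span (insert b X)"
    by (metis insert_subset span_base span_minimal span_mono span_superset subspace_span subset_insertI insertI1)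
  show "span (insert b X) \<subseteq> span (insert b (span X))"
    by (intro span_mono) (auto intro: span_base)
qed

lemma hb_finite:
  fixes p :: "'a::real_vector \<Rightarrow> real"
  assumes sub: "\<And>x y. p (x + y) \<le> p x + p y"
    and hom: "\<And>x r. r \<ge> 0 \<Longrightarrow> p (r *\<^sub>R x) = r * p x"
    and c: "c \<noteq> 0" and a1: "\<alpha> \<le> p c" and a2: "- \<alpha> \<le> p (- c)"
    and T: "finite T"
  shows "\<exists>f. lin_on f (span (insert c T)) \<and> (\<forall>x\<in>span (insert c T). f x \<le> p x) \<and> f c = \<alpha>"
  using T
proof (induction T rule: finite_induct)
  case empty
  then show ?case using hb_base[OF hom c a1 a2] by simp
next
  case (insert b T)
  then obtain f where f: "lin_on f (span (insert c T))" "\<forall>x\<in>span (insert c T). f x \<le> p x" "f c = \<alpha>"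
    by blast
  from hb_ext[OF sub hom subspace_span f(1) f(2), of b] obtain g where
    g: "lin_on g (span (insert b (span (insert c T))))"
       "\<forall>x\<in>span (insert b (span (insert c T))). g x \<le> p x"
       "\<forall>x\<in>span (insert c T). g x = f x" by blast
  have e: "span (insert b (span (insert c T))) = span (insert c (insert b T))"
    by (simp add: span_insert_span insert_commute)
  have "g c = \<alpha>" using g(3) f(3) by (simp add: span_base)
  then show ?case using g e by auto
qed

lemma hb_full:
  fixes p :: "'a::real_vector \<Rightarrow> real"
  assumes sub: "\<And>x y. p (x + y) \<le> p x + p y"
    and hom: "\<And>x r. r \<ge> 0 \<Longrightarrow> p (r *\<^sub>R x) = r * p x"
    and c: "c \<noteq> 0" and a1: "\<alpha> \<le> p c" and a2: "- \<alpha> \<le> p (- c)"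
    and B: "finite B" "span (B::'a set) = UNIV"
  shows "\<exists>f. linear f \<and> (\<forall>x. f x \<le> p x) \<and> f c = \<alpha>"
proof -
  obtain f where f: "lin_on f (span (insert c B))" "\<forall>x\<in>span (insert c B). f x \<le> p x" "f c = \<alpha>"
    using hb_finite[OF sub hom c a1 a2 B(1)] by blast
  have U: "span (insert c B) = UNIV" using B(2) span_mono[of B "insert c B"] by auto
  have "linear f" using f(1) unfolding U lin_on_def by (intro linearI) auto
  then show ?thesis using f(2,3) U by auto
qed

lemma norming:
  fixes c :: "'a::real_normed_vector"
  assumes c: "c \<noteq> 0" and B: "finite B" "span (B::'a set) = UNIV"
  shows "\<exists>f. bounded_linear f \<and> (\<forall>x. \<bar>f x\<bar> \<le> norm x) \<and> f c = norm c"
proof -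
  obtain f where f: "linear f" "\<forall>x. f x \<le> norm x" "f c = norm c"
    using hb_full[of norm c "norm c" B] c B by (auto intro: norm_triangle_ineq)
  have ab: "\<bar>f x\<bar> \<le> norm x" for x
    using f(2)[rule_format, of x] f(2)[rule_format, of "- x"] linear_neg[OF f(1), of x] by auto
  have "bounded_linear f"
    by (rule bounded_linear_intro[where K=1]) (use f(1) ab in \<open>auto simp: linear_add linear_scale\<close>)
  then show ?thesis using ab f(3) by blast
qed



lemma seqc:
  fixes S :: "'a::real_normed_vector set"
  assumes "finite S"
  shows "\<forall>x::nat\<Rightarrow>'a. (\<forall>k. x k \<in> span S) \<and> bounded (range x) \<longrightarrow> (\<exists>l r. l \<in> span S \<and> strict_mono r \<and> (x \<circ> r) \<longlonglongrightarrow> l)"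
  using assms
proof (induction S rule: finite_induct)
  case empty
  show ?case
  proof (intro allI impI)
    fix x :: "nat \<Rightarrow> 'a" assume a: "(\<forall>k. x k \<in> span {}) \<and> bounded (range x)"
    then have "\<forall>k. x k = 0" by auto
    then have "(x \<circ> id) \<longlonglongrightarrow> 0" by (simp add: o_def)
    then show "\<exists>l r. l \<in> span {} \<and> strict_mono r \<and> (x \<circ> r) \<longlonglongrightarrow> l"
      using strict_mono_id span_zero by blast
  qed
next
  case (insert b S)
  show ?case
  proof (cases "b \<in> span S")
    case True
    then have "span (insert b S) = span S" by (rule span_redundant)
    then show ?thesis using insert.IH by simp
  next
    case bS: False
    have clo: "closed (span S)"
      unfolding closed_sequential_limits
    proof safe
      fix y l assume y: "\<forall>n. y n \<in> span S" and yl: "y \<longlonglongrightarrow> l"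
      have "bounded (range y)" using yl by (rule convergent_imp_bounded)
      then obtain l' r where l': "l' \<in> span S" "strict_mono r" "(y \<circ> r) \<longlonglongrightarrow> l'"
        using insert.IH y by blast
      have "(y \<circ> r) \<longlonglongrightarrow> l" using yl l'(2) by (rule LIMSEQ_subseq_LIMSEQ)
      then have "l = l'" using l'(3) LIMSEQ_unique by blast
      then show "l \<in> span S" using l' by simp
    qed
    show ?thesis
    proof safe
      fix x :: "nat \<Rightarrow> 'a"
      assume xs: "\<forall>k. x k \<in> span (insert b S)" and xb: "bounded (range x)"
      obtain M where M: "\<And>k. norm (x k) \<le> M" using xb unfolding bounded_iff by auto
      have M0: "0 \<le> M" using M[of 0] norm_ge_zero order_trans by blast
      define t where "t k = (SOME t. x k - t *\<^sub>R b \<in> span S)" for k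
      have t: "x k - t k *\<^sub>R b \<in> span S" for k
      proof -
        obtain s where "x k - s *\<^sub>R b \<in> span S" using xs span_breakdown_eq by blast
        then show ?thesis unfolding t_def by (rule someI)
      qed
      have tb: "\<exists>T. \<forall>k. \<bar>t k\<bar> \<le> T"
      proof (rule ccontr)
        assume "\<not> ?thesis"
        then have "\<forall>j::nat. \<exists>k. \<bar>t k\<bar> > real (Suc j)" by (metis not_le)
        then obtain kk where kk: "\<And>j. \<bar>t (kk j)\<bar> > real (Suc j)" by (rule choice[THEN exE]) blast
        define z where "z j = - (inverse (t (kk j))) *\<^sub>R (x (kk j) - t (kk j) *\<^sub>R b)" for j
        have zS: "z j \<in> span S" for j unfolding z_def using t by (intro span_scale)
        have tnz: "t (kk j) \<noteq> 0" for j using kk[of j] by auto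
        have ze: "z j - b = - (inverse (t (kk j))) *\<^sub>R x (kk j)" for j
          unfolding z_def using tnz[of j] by (simp add: algebra_simps)
        have nb: "\<forall>j. norm (z j - b) \<le> M * inverse (real (Suc j))"
        proof
          fix j
          have "norm (z j - b) = norm (x (kk j)) / \<bar>t (kk j)\<bar>"
            unfolding ze by (simp add: divide_inverse_commute)
          also have "\<dots> \<le> M / \<bar>t (kk j)\<bar>" using M by (simp add: divide_right_mono)
          also have "\<dots> \<le> M / real (Suc j)" using kk[of j] M0
            by (intro divide_left_mono) auto
          finally show "norm (z j - b) \<le> M * inverse (real (Suc j))" by (simp add: divide_inverse)
        qed
        have "(\<lambda>j. M * inverse (real (Suc j))) \<longlonglongrightarrow> 0"
          by (rule tendsto_mult_right_zero[OF LIMSEQ_inverse_real_of_nat])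
        then have "(\<lambda>j. z j - b) \<longlonglongrightarrow> 0"
          by (rule Lim_null_comparison[OF always_eventually[OF nb]])
        then have "z \<longlonglongrightarrow> b" by (simp add: LIM_zero_iff)
        then have "b \<in> span S" using clo zS closed_sequential_limits by blast
        then show False using bS by simp
      qed
      then obtain T where T: "\<And>k. \<bar>t k\<bar> \<le> T" by blast
      have "bounded (range t)" unfolding bounded_iff using T by auto
      then obtain \<tau> r1 where r1: "strict_mono r1" "(t \<circ> r1) \<longlonglongrightarrow> \<tau>"
        using bounded_imp_convergent_subsequence by blast
      define m where "m k = x (r1 k) - t (r1 k) *\<^sub>R b" for k
      have mS: "\<forall>k. m k \<in> span S" unfolding m_def using t by simp
      have "norm (m k) \<le> M + T * norm b" for k
      proof -
        have "norm (m k) \<le> norm (x (r1 k)) + norm (t (r1 k) *\<^sub>R b)"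
          unfolding m_def by (rule norm_triangle_ineq4)
        also have "norm (t (r1 k) *\<^sub>R b) = \<bar>t (r1 k)\<bar> * norm b" by simp
        also have "norm (x (r1 k)) + \<bar>t (r1 k)\<bar> * norm b \<le> M + T * norm b"
          by (rule add_mono[OF M mult_right_mono[OF T norm_ge_zero]])
        finally show ?thesis .
      qed
      then have "bounded (range m)" unfolding bounded_iff by blast
      then obtain l2 r2 where r2: "l2 \<in> span S" "strict_mono r2" "(m \<circ> r2) \<longlonglongrightarrow> l2"
        using insert.IH mS by blast
      have t2: "(t \<circ> r1 \<circ> r2) \<longlonglongrightarrow> \<tau>" using r1(2) r2(2) by (rule LIMSEQ_subseq_LIMSEQ)
      have xe: "x \<circ> (r1 \<circ> r2) = (\<lambda>k. (m \<circ> r2) k + (t \<circ> r1 \<circ> r2) k *\<^sub>R b)"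
        by (auto simp: m_def)
      have "(x \<circ> (r1 \<circ> r2)) \<longlonglongrightarrow> l2 + \<tau> *\<^sub>R b"
        unfolding xe by (intro tendsto_intros r2(3) t2)
      moreover have "l2 + \<tau> *\<^sub>R b \<in> span (insert b S)"
        unfolding span_breakdown_eq using r2(1) by (intro exI[of _ \<tau>]) simp
      moreover have "strict_mono (r1 \<circ> r2)" using r1(1) r2(2) by (rule strict_mono_o)
      ultimately show "\<exists>l r. l \<in> span (insert b S) \<and> strict_mono r \<and> (x \<circ> r) \<longlonglongrightarrow> l"
        by blast
    qed
  qed
qed

lemma fd_compact:
  fixes K :: "'a::real_normed_vector set"
  assumes B: "finite B" "span (B::'a set) = UNIV" and K: "closed K" "bounded K"
  shows "compact K"
proof -
  have "seq_compact K"
  unfolding seq_compact_def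
proof safe
  fix f :: "nat \<Rightarrow> 'a" assume f: "\<forall>n. f n \<in> K"
  have "range f \<subseteq> K" using f by blast
  then have "bounded (range f)" by (rule bounded_subset[OF K(2)])
  moreover have "\<forall>k. f k \<in> span B" using B(2) by simp
  ultimately obtain l r where lr: "strict_mono r" "(f \<circ> r) \<longlonglongrightarrow> l"
    using seqc[OF B(1), rule_format, of f] by blast
  have "\<forall>n. (f \<circ> r) n \<in> K" using f by simp
  then have "l \<in> K" using K(1) lr(2) closed_sequential_limits by blast
  then show "\<exists>l\<in>K. \<exists>r. strict_mono r \<and> (f \<circ> r) \<longlonglongrightarrow> l" using lr by blast
qed
  then show ?thesis by (rule seq_compact_imp_Heine_Borel)
qed



locale fdim =
  fixes B :: "'a::real_normed_vector set"
  assumes finB: "finite B" and indB: "independent B" and spB: "span B = UNIV"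
begin

lemma fdvs: "finite_dimensional_vector_space (scaleR :: real \<Rightarrow> 'a \<Rightarrow> 'a) B"
  apply unfold_locales
  using finB indB spB by (auto simp: dependent_raw_def span_raw_def)

sublocale fd: finite_dimensional_vector_space "scaleR :: real \<Rightarrow> 'a \<Rightarrow> 'a" B
  rewrites "module.dependent (*\<^sub>R) = dependent"
    and "module.representation (*\<^sub>R) = representation"
    and "module.subspace (*\<^sub>R) = subspace"
    and "module.span (*\<^sub>R) = span"
    and "vector_space.extend_basis (*\<^sub>R) = extend_basis"
    and "vector_space.dim (*\<^sub>R) = dim"
    and "Vector_Spaces.linear (*\<^sub>R) (*\<^sub>R) = linear"
    and "Vector_Spaces.linear (*) (*\<^sub>R) = linear"
  by (auto simp add: dependent_raw_def representation_raw_def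
      subspace_raw_def span_raw_def extend_basis_raw_def dim_raw_def linear_def
      real_scaleR_def[abs_def] fdvs)

lemma ker_dim:
  assumes W: "subspace W" and f: "linear (f :: 'a \<Rightarrow> real)"
  shows "dim W \<le> dim (W \<inter> {x. f x = 0}) + 1"
proof (cases "\<forall>w\<in>W. f w = 0")
  case True
  then have "W \<inter> {x. f x = 0} = W" by auto
  then show ?thesis by simp
next
  case False
  then obtain w0 where w0: "w0 \<in> W" "f w0 \<noteq> 0" by auto
  let ?K = "W \<inter> {x. f x = 0}"
  have "W \<subseteq> span (insert w0 ?K)"
  proof
    fix y assume y: "y \<in> W"
    define k where "k = f y / f w0"
    have "y - k *\<^sub>R w0 \<in> W" using W y w0 by (simp add: subspace_diff subspace_scale)
    moreover have "f (y - k *\<^sub>R w0) = 0"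
      using w0(2) by (simp add: linear_diff[OF f] linear_scale[OF f] k_def)
    ultimately have "y - k *\<^sub>R w0 \<in> span ?K" by (simp add: span_base)
    then show "y \<in> span (insert w0 ?K)" unfolding span_breakdown_eq by blast
  qed
  then have "dim W \<le> dim (insert w0 ?K)" by (rule fd.dim_mono)
  also have "\<dots> \<le> dim ?K + 1" by (simp add: fd.dim_insert)
  finally show ?thesis .
qed

lemma subspace_kers:
  assumes "\<forall>i\<in>I. linear (h i :: 'a \<Rightarrow> real)"
  shows "subspace {x. \<forall>i\<in>I. h i x = 0}"
  using assms unfolding subspace_def by (auto simp: linear_0 linear_add linear_scale)

lemma kers_dim:
  assumes "finite I" "\<forall>i\<in>I. linear (h i :: 'a \<Rightarrow> real)"
  shows "dim (UNIV :: 'a set) \<le> dim {x. \<forall>i\<in>I. h i x = 0} + card I"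
  using assms
proof (induction I rule: finite_induct)
  case empty
  then show ?case by simp
next
  case (insert j I)
  let ?Z = "{x. \<forall>i\<in>I. h i x = 0}"
  have "?Z \<inter> {x. h j x = 0} = {x. \<forall>i\<in>insert j I. h i x = 0}" by auto
  moreover have "dim ?Z \<le> dim (?Z \<inter> {x. h j x = 0}) + 1"
    using insert subspace_kers[of I h] by (intro ker_dim) auto
  ultimately have "dim ?Z \<le> dim {x. \<forall>i\<in>insert j I. h i x = 0} + 1" by simp
  moreover have "card (insert j I) = card I + 1" using insert(1,2) by simp
  moreover have "dim (UNIV :: 'a set) \<le> dim ?Z + card I" using insert by blast
  ultimately show ?case by linarith
qed

lemma kers_nonzero:
  assumes "finite I" "\<forall>i\<in>I. linear (h i :: 'a \<Rightarrow> real)" "card I < dim (UNIV :: 'a set)"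
  shows "\<exists>x. x \<noteq> 0 \<and> (\<forall>i\<in>I. h i x = 0)"
proof -
  let ?Z = "{x. \<forall>i\<in>I. h i x = 0}"
  have d: "dim (UNIV :: 'a set) \<le> dim ?Z + card I" by (rule kers_dim[OF assms(1,2)])
  have "dim ?Z \<noteq> 0" using d assms(3) by linarith
  then have "\<not> ?Z \<subseteq> {0}" unfolding fd.dim_eq_0 .
  then obtain x where "x \<in> ?Z" "x \<noteq> 0" by blast
  then show ?thesis by blast
qed

lemma family:
  assumes "subspace (K::'a set)"
  shows "\<exists>F. finite F \<and> card F \<le> dim K \<and> (\<forall>f\<in>F. bounded_linear f \<and> (\<exists>y. f y > 0))
     \<and> (\<forall>x\<in>K. x \<noteq> 0 \<longrightarrow> (\<exists>f\<in>F. f x \<noteq> (0::real)))"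
  using assms
proof (induction "dim K" arbitrary: K rule: less_induct)
  case less
  show ?case
  proof (cases "K \<subseteq> {0}")
    case True
    then have "\<forall>x\<in>K. x \<noteq> 0 \<longrightarrow> (\<exists>f\<in>{}. f x \<noteq> (0::real))" by blast
    then show ?thesis by (intro exI[of _ "{}"]) simp
  next
    case False
    then obtain x where x: "x \<in> K" "x \<noteq> 0" by auto
    obtain f where f: "bounded_linear f" "\<forall>y. \<bar>f y\<bar> \<le> norm y" "f x = norm x"
      using norming[OF x(2) finB spB] by blast
    have lf: "linear f" using f(1) bounded_linear.linear by blast
    let ?K' = "K \<inter> {y. f y = 0}"
    have "subspace {y. f y = 0}" using subspace_kers[of "{()}" "\<lambda>_. f"] lf by simp
    then have sK': "subspace ?K'" using less.prems by (rule subspace_inter[rotated])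
    have "x \<notin> ?K'" using x f(3) by simp
    then have "?K' \<subset> K" using x(1) by blast
    moreover have e1: "span ?K' = ?K'" by (rule span_eq_iff[THEN iffD2, OF sK'])
    moreover have e2: "span K = K" by (rule span_eq_iff[THEN iffD2, OF less.prems])
    ultimately have "span ?K' \<subset> span K" by (simp only: e1 e2)
    then have lt: "dim ?K' < dim K" by (rule fd.dim_psubset)
    obtain F' :: "('a \<Rightarrow> real) set" where F': "finite F'" "card F' \<le> dim ?K'" "\<forall>f\<in>F'. bounded_linear f \<and> (\<exists>y. f y > 0)"
      "\<forall>y\<in>?K'. y \<noteq> 0 \<longrightarrow> (\<exists>f\<in>F'. f y \<noteq> 0)"
      using less.hyps[OF lt sK'] apply (elim exE conjE) apply (rule that) by assumption+
    have "card (insert f F') \<le> Suc (card F')" using F'(1) by (simp add: card_insert_if)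
    then have "card (insert f F') \<le> dim K" using F'(2) lt by linarith
    moreover have "\<forall>y\<in>K. y \<noteq> 0 \<longrightarrow> (\<exists>g\<in>insert f F'. g y \<noteq> 0)" using F'(4) by blast
    moreover have "\<exists>y. f y > 0" using f(3) x(2) by (intro exI[of _ x]) simp
    moreover have "finite (insert f F')" using F'(1) by simp
    moreover have "\<forall>g\<in>insert f F'. bounded_linear g \<and> (\<exists>y. g y > 0)" using F'(3) f(1) \<open>\<exists>y. f y > 0\<close> by blast
    ultimately show ?thesis by blast
  qed
qed

end


lemma blin_one:
  fixes f :: "'a::real_normed_vector \<Rightarrow> real"
  assumes bl: "bounded_linear f" and le: "\<forall>z. \<bar>f z\<bar> \<le> norm z" and c: "norm c = 1" "f c = 1"
  shows "norm (Blinfun f) = 1" and "blinfun_apply (Blinfun f) = f"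
proof -
  show ap: "blinfun_apply (Blinfun f) = f" using bl by (rule bounded_linear_Blinfun_apply)
  have "norm (Blinfun f) \<le> 1" by (rule norm_blinfun_bound) (use le ap in auto)
  moreover have "norm (blinfun_apply (Blinfun f) c) \<le> norm (Blinfun f) * norm c" by (rule norm_blinfun)
  then have "1 \<le> norm (Blinfun f)" using ap c by simp
  ultimately show "norm (Blinfun f) = 1" by simp
qed

lemma ray:
  fixes c x :: "'a::real_normed_vector" and \<phi> :: "'a \<Rightarrow>\<^sub>L real"
  assumes B: "finite B" "span (B::'a set) = UNIV" and sm: "smooth_space TYPE('a)"
    and c: "norm c = 1" and ph: "norm \<phi> = 1" "blinfun_apply \<phi> c = 1"
    and px: "blinfun_apply \<phi> x > 0"
  shows "\<exists>s>0. norm (c - s *\<^sub>R x) < 1"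
proof (rule ccontr)
  assume "\<not> ?thesis"
  then have far: "1 \<le> norm (c - s *\<^sub>R x)" if "s > 0" for s using that not_less by blast
  define p where "p y = Inf ((\<lambda>s. norm (y - s *\<^sub>R x)) ` {0..})" for y
  have ne: "(\<lambda>s. norm (y - s *\<^sub>R x)) ` {0..} \<noteq> {}" for y by auto
  have bb: "bdd_below ((\<lambda>s. norm (y - s *\<^sub>R x)) ` {0..})" for y by (rule bdd_belowI[of _ 0]) auto
  have plow: "p y \<le> norm (y - s *\<^sub>R x)" if "s \<ge> 0" for y s
    unfolding p_def by (rule cInf_lower[OF _ bb]) (use that in auto)
  have pglb: "m \<le> p y" if "\<And>s. s \<ge> 0 \<Longrightarrow> m \<le> norm (y - s *\<^sub>R x)" for m y
    unfolding p_def by (rule cInf_greatest[OF ne]) (use that in auto)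
  have p0: "0 \<le> p y" for y by (rule pglb) simp
  have sub: "p (y + z) \<le> p y + p z" for y z
  proof -
    have A: "p (y + z) - norm (z - s2 *\<^sub>R x) \<le> p y" if s2: "s2 \<ge> 0" for s2
    proof (rule pglb)
      fix s1 :: real assume s1: "s1 \<ge> 0"
      have "p (y + z) \<le> norm ((y + z) - (s1 + s2) *\<^sub>R x)" using s1 s2 by (intro plow) simp
      also have "(y + z) - (s1 + s2) *\<^sub>R x = (y - s1 *\<^sub>R x) + (z - s2 *\<^sub>R x)" by (simp add: algebra_simps)
      also have "norm \<dots> \<le> norm (y - s1 *\<^sub>R x) + norm (z - s2 *\<^sub>R x)" by (rule norm_triangle_ineq)
      finally show "p (y + z) - norm (z - s2 *\<^sub>R x) \<le> norm (y - s1 *\<^sub>R x)" by simp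
    qed
    have "p (y + z) - p y \<le> p z"
    proof (rule pglb)
      fix s :: real assume "0 \<le> s" then show "p (y + z) - p y \<le> norm (z - s *\<^sub>R x)" using A[of s] by linarith
    qed
    then show ?thesis by simp
  qed
  have hom: "p (r *\<^sub>R y) = r * p y" if r0: "r \<ge> 0" for r y
  proof (cases "r = 0")
    case True
    have "p 0 \<le> 0" using plow[of 0 0] by simp
    then show ?thesis using True p0[of 0] by simp
  next
    case False
    then have r: "r > 0" using r0 by simp
    have "p (r *\<^sub>R y) / r \<le> p y"
    proof (rule pglb)
      fix s :: real assume s: "s \<ge> 0"
      have "p (r *\<^sub>R y) \<le> norm (r *\<^sub>R y - (r * s) *\<^sub>R x)" using s r by (intro plow) simp
      also have "r *\<^sub>R y - (r * s) *\<^sub>R x = r *\<^sub>R (y - s *\<^sub>R x)" by (simp add: algebra_simps)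
      also have "norm \<dots> = r * norm (y - s *\<^sub>R x)" using r by simp
      finally show "p (r *\<^sub>R y) / r \<le> norm (y - s *\<^sub>R x)" using r by (simp add: divide_le_eq mult.commute)
    qed
    then have "p (r *\<^sub>R y) \<le> r * p y" using r by (simp add: divide_le_eq mult.commute)
    moreover have "r * p y \<le> p (r *\<^sub>R y)"
    proof (rule pglb)
      fix s :: real assume s: "s \<ge> 0"
      have "p y \<le> norm (y - (s / r) *\<^sub>R x)" using s r by (intro plow) simp
      then have "r * p y \<le> r * norm (y - (s / r) *\<^sub>R x)" using r by simp
      also have "r * norm (y - (s / r) *\<^sub>R x) = norm (r *\<^sub>R (y - (s / r) *\<^sub>R x))" using r by simp
      also have "r *\<^sub>R (y - (s / r) *\<^sub>R x) = r *\<^sub>R y - s *\<^sub>R x" using r by (simp add: algebra_simps)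
      finally show "r * p y \<le> norm (r *\<^sub>R y - s *\<^sub>R x)" .
    qed
    ultimately show ?thesis by linarith
  qed
  have c0: "c \<noteq> 0" using c by auto
  have pc: "1 \<le> p c"
  proof (rule pglb)
    fix s :: real assume s: "s \<ge> 0"
    show "1 \<le> norm (c - s *\<^sub>R x)"
    proof (cases "s = 0")
      case True then show ?thesis using c by simp
    next
      case False then show ?thesis using far s by simp
    qed
  qed
  have m1: "- 1 \<le> p (- c)" using p0[of "- c"] by linarith
  obtain f where f: "linear f" "\<forall>y. f y \<le> p y" "f c = 1"
    using hb_full[of p c 1 B, OF sub hom c0 pc m1 B] by blast
  have pn: "p y \<le> norm y" for y using plow[of 0 y] by simp
  have ab: "\<bar>f y\<bar> \<le> norm y" for y
    using f(2) pn[of y] pn[of "- y"] linear_neg[OF f(1), of y] by (smt (verit) norm_minus_cancel)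
  have bl: "bounded_linear f"
    by (rule bounded_linear_intro[where K=1]) (use f(1) ab in \<open>auto simp: linear_add linear_scale\<close>)
  have psi: "norm (Blinfun f) = 1" "blinfun_apply (Blinfun f) = f"
    using blin_one[OF bl _ c f(3)] ab by auto
  have "\<exists>!g :: 'a \<Rightarrow>\<^sub>L real. norm g = 1 \<and> blinfun_apply g c = norm c"
    using sm c0 unfolding smooth_space_def by blast
  moreover have "norm (Blinfun f) = 1 \<and> blinfun_apply (Blinfun f) c = norm c" using psi f(3) c by simp
  moreover have "norm \<phi> = 1 \<and> blinfun_apply \<phi> c = norm c" using ph c by simp
  ultimately have eq: "Blinfun f = \<phi>" by blast
  have "f x \<le> 0" using f(2) plow[of 1 x] by (smt (verit) scaleR_one diff_self norm_zero)
  then show False using px eq psi(2) by simp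
qed

lemma attain:
  fixes g :: "'a::real_normed_vector \<Rightarrow> real"
  assumes B: "finite B" "span (B::'a set) = UNIV" and bl: "bounded_linear g" and y: "g y > 0"
  shows "\<exists>c (\<phi>::'a \<Rightarrow>\<^sub>L real). norm c = 1 \<and> norm \<phi> = 1 \<and> blinfun_apply \<phi> c = 1 \<and> (\<forall>x. blinfun_apply \<phi> x > 0 \<longleftrightarrow> g x > 0)"
proof -
  let ?S = "sphere (0::'a) 1"
  have "?S = cball 0 1 - ball 0 1" by auto
  then have cl: "closed ?S" by (simp add: closed_Diff)
  have bd: "bounded ?S" by (rule bounded_subset[OF bounded_cball[of 0 1]]) auto
  have cS: "compact ?S" by (rule fd_compact[OF B cl bd])
  have g0: "g 0 = 0" using bl by (simp add: linear_simps)
  have gs: "g (r *\<^sub>R z) = r * g z" for r z using bl by (simp add: linear_simps)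
  have y0: "y \<noteq> 0" using y g0 by auto
  let ?u = "inverse (norm y) *\<^sub>R y"
  have uS: "?u \<in> ?S" using y0 by simp
  have cont: "continuous_on ?S g" using bl by (rule linear_continuous_on)
  obtain c where c: "c \<in> ?S" "\<forall>z\<in>?S. g z \<le> g c"
    using continuous_attains_sup[OF cS _ cont] uS by blast
  define M where "M = g c"
  have "g ?u > 0" using y y0 gs by simp
  then have M: "M > 0" using c(2) uS M_def by fastforce
  have gle: "g z \<le> M * norm z" for z
  proof (cases "z = 0")
    case True then show ?thesis using g0 by simp
  next
    case False
    then have "inverse (norm z) *\<^sub>R z \<in> ?S" by simp
    then have "g (inverse (norm z) *\<^sub>R z) \<le> M" using c(2) M_def by blast
    then have "inverse (norm z) * g z \<le> M" using gs by simp
    then show ?thesis using False by (simp add: field_simps)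
  qed
  define h where "h z = g z / M" for z
  have blh: "bounded_linear h"
    unfolding h_def by (rule bounded_linear_compose[OF bounded_linear_divide bl])
  have hle: "h z \<le> norm z" for z using gle[of z] M by (simp add: h_def divide_le_eq mult.commute)
  have hneg: "h (- z) = - h z" for z using gs[of "-1" z] by (simp add: h_def)
  have ab: "\<forall>z. \<bar>h z\<bar> \<le> norm z" using hle hneg by (metis abs_le_iff minus_le_iff norm_minus_cancel)
  have c1: "norm c = 1" using c(1) by simp
  have hc: "h c = 1" using M by (simp add: h_def M_def)
  have ph: "norm (Blinfun h) = 1" "blinfun_apply (Blinfun h) = h" using blin_one[OF blh ab c1 hc] by auto
  have "\<forall>x. blinfun_apply (Blinfun h) x > 0 \<longleftrightarrow> g x > 0" using ph(2) M by (simp add: h_def zero_less_divide_iff)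
  then show ?thesis using ph c1 hc by (intro exI[of _ c] exI[of _ "Blinfun h"]) simp
qed

lemma halfspace:
  fixes g :: "'a::real_normed_vector \<Rightarrow> real"
  assumes B: "finite B" "span (B::'a set) = UNIV" and sm: "smooth_space TYPE('a)"
    and bl: "bounded_linear g" and y: "\<exists>y. g y > 0"
  shows "\<exists>c. norm c = 1 \<and> (\<forall>x. g x > 0 \<longrightarrow> (\<exists>s>0. norm (c - s *\<^sub>R x) < 1))"
proof -
  obtain c and \<phi> :: "'a \<Rightarrow>\<^sub>L real" where c: "norm c = 1" "norm \<phi> = 1" "blinfun_apply \<phi> c = 1"
    "\<forall>x. blinfun_apply \<phi> x > 0 \<longleftrightarrow> g x > 0"
    using attain[OF B bl] y by blast
  show ?thesis using ray[OF B sm c(1,2,3)] c(1,4) by blast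
qed



lemma ball_mono_line:
  fixes c z :: "'a::real_normed_vector"
  assumes "norm c = 1" "t \<le> t'" "dist (t *\<^sub>R c) z < t"
  shows "dist (t' *\<^sub>R c) z < t'"
proof -
  have "dist (t' *\<^sub>R c) z \<le> dist (t' *\<^sub>R c) (t *\<^sub>R c) + dist (t *\<^sub>R c) z" by (rule dist_triangle)
  also have "dist (t' *\<^sub>R c) (t *\<^sub>R c) = t' - t"
  proof -
    have "t' *\<^sub>R c - t *\<^sub>R c = (t' - t) *\<^sub>R c" by (simp add: algebra_simps)
    then show ?thesis using assms(1,2) by (simp add: dist_norm)
  qed
  finally show ?thesis using assms(3) by simp
qed

theorem mainTheorem7:
  fixes A :: "'a::banach set" and n :: nat
  assumes dimX: "dim (UNIV :: 'a set) = n" and npos: "n \<ge> 1"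
    and bdd: "bounded A" and nz: "0 \<notin> A"
    and rays: "\<forall>x::'a. x \<noteq> 0 \<longrightarrow> (\<exists>r>0. r *\<^sub>R x \<in> A)"
  shows "(\<forall>\<B>. ball_covering \<B> A \<longrightarrow> \<not> (finite \<B> \<and> card \<B> \<le> n))
     \<and> ((smooth_space TYPE('a) \<and> dist0 A > 0) \<longrightarrow>
          (\<exists>\<B>. ball_covering \<B> A \<and> finite \<B> \<and> card \<B> = n + 1))"
proof -
  obtain B :: "'a set" where B: "B \<subseteq> UNIV" "independent B" "UNIV \<subseteq> span B" "card B = dim (UNIV::'a set)"
    using basis_exists by blast
  have finB: "finite B" using B(4) dimX npos card.infinite by force
  have spB: "span B = UNIV" using B(3) by auto
  interpret fdim B using finB B(2) spB by unfold_locales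
  have nzv: "\<exists>v::'a. v \<noteq> 0"
  proof (rule ccontr)
    assume "\<not> ?thesis"
    then have "(UNIV::'a set) \<subseteq> {0}" by auto
    then have "dim (UNIV::'a set) = 0" using fd.dim_eq_0 by blast
    then show False using dimX npos by simp
  qed
  have partI: "\<forall>\<B>. ball_covering \<B> A \<longrightarrow> \<not> (finite \<B> \<and> card \<B> \<le> n)"
  proof (intro allI impI notI)
    fix \<B> :: "'a set set" assume bc: "ball_covering \<B> A" and fc: "finite \<B> \<and> card \<B> \<le> n"
    from bc have balls: "\<forall>Bl\<in>\<B>. \<exists>c r. Bl = ball c r \<and> 0 < r \<and> r \<le> norm c" and cov: "A \<subseteq> \<Union>\<B>"
      by (auto simp: ball_covering_def)
    have "\<forall>Bl\<in>\<B>. \<exists>f. linear f \<and> (\<forall>z\<in>Bl. f z > (0::real))"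
    proof
      fix Bl assume "Bl \<in> \<B>"
      then obtain c r where cr: "Bl = ball c r" "0 < r" "r \<le> norm c" using balls by blast
      have c0: "c \<noteq> 0" using cr by auto
      obtain f where f: "bounded_linear f" "\<forall>x. \<bar>f x\<bar> \<le> norm x" "f c = norm c"
        using norming[OF c0 finB spB] by blast
      have "f z > 0" if "z \<in> Bl" for z
      proof -
        have d: "norm (c - z) < r" using that cr by (simp add: dist_norm)
        have "f z = f c - f (c - z)" using f(1) by (simp add: linear_simps)
        moreover have "f (c - z) \<le> norm (c - z)" using f(2) abs_le_D1 by blast
        ultimately show ?thesis using d cr f(3) by linarith
      qed
      then show "\<exists>f. linear f \<and> (\<forall>z\<in>Bl. f z > (0::real))" using f(1) bounded_linear.linear by blast
    qed
    then have "\<exists>ff. \<forall>Bl\<in>\<B>. linear (ff Bl) \<and> (\<forall>z\<in>Bl. ff Bl z > (0::real))" by (rule bchoice)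
    then obtain ff where ff: "\<forall>Bl\<in>\<B>. linear (ff Bl) \<and> (\<forall>z\<in>Bl. ff Bl z > (0::real))"
      by blast
    obtain v :: 'a where v: "v \<noteq> 0" using nzv by blast
    obtain r0 where "r0 > 0" "r0 *\<^sub>R v \<in> A" using rays v by blast
    then have "\<B> \<noteq> {}" using cov by blast
    then obtain B0 where B0: "B0 \<in> \<B>" by blast
    let ?I = "\<B> - {B0}"
    have "card ?I = card \<B> - 1" using B0 fc by (simp add: card_Diff_singleton)
    then have cI: "card ?I < dim (UNIV::'a set)" using fc dimX npos by linarith
    have linI: "\<forall>i\<in>?I. linear (ff i)" using ff by blast
    obtain x where x: "x \<noteq> 0" "\<forall>Bl\<in>?I. ff Bl x = 0"
      using kers_nonzero[of ?I ff, OF _ linI cI] fc by auto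
    define y where "y = (if ff B0 x \<le> 0 then x else - x)"
    have y0: "y \<noteq> 0" using x by (simp add: y_def)
    have yle: "ff Bl y \<le> 0" if Bl: "Bl \<in> \<B>" for Bl
    proof (cases "Bl = B0")
      case True
      have "ff B0 (- x) = - ff B0 x" using ff B0 by (simp add: linear_neg)
      then show ?thesis using True by (auto simp: y_def)
    next
      case False
      then have "ff Bl x = 0" using x Bl by blast
      moreover have "ff Bl (- x) = - ff Bl x" using ff Bl by (simp add: linear_neg)
      ultimately show ?thesis by (simp add: y_def)
    qed
    obtain r where r: "r > 0" "r *\<^sub>R y \<in> A" using rays y0 by blast
    then obtain Bl where Bl: "Bl \<in> \<B>" "r *\<^sub>R y \<in> Bl" using cov by blast
    then have "ff Bl (r *\<^sub>R y) > 0" using ff by blast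
    moreover have "ff Bl (r *\<^sub>R y) = r * ff Bl y" using ff Bl by (simp add: linear_scale)
    moreover have "r * ff Bl y \<le> 0" using yle[OF Bl(1)] r(1) by (simp add: mult_nonneg_nonpos)
    ultimately show False by simp
  qed
  have partII: "(smooth_space TYPE('a) \<and> dist0 A > 0) \<longrightarrow>
          (\<exists>\<B>. ball_covering \<B> A \<and> finite \<B> \<and> card \<B> = n + 1)"
  proof
    assume H: "smooth_space TYPE('a) \<and> dist0 A > 0"
    then have sm: "smooth_space TYPE('a)" by simp
    define dd where "dd = dist0 A"
    have dd: "dd > 0" using H dd_def by simp
    have ddle: "dd \<le> norm a" if "a \<in> A" for a
      unfolding dd_def dist0_def by (rule cINF_lower[OF bdd_belowI2[of _ 0] that]) simp
    obtain M where M: "\<forall>a\<in>A. norm a \<le> M" using bdd by (auto simp: bounded_iff)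
    define K where "K = cball (0::'a) M - ball 0 dd"
    have AK: "A \<subseteq> K" using ddle M by (force simp: K_def dist_norm)
    have "closed K" unfolding K_def by (intro closed_Diff closed_cball open_ball)
    moreover have "bounded K" unfolding K_def by (rule bounded_subset[OF bounded_cball]) blast
    ultimately have cK: "compact K" by (rule fd_compact[OF finB spB])
    have Knz: "z \<noteq> 0" if "z \<in> K" for z using that dd by (auto simp: K_def)
    obtain F :: "('a \<Rightarrow> real) set" where F: "finite F" "card F \<le> dim (UNIV::'a set)"
      "\<forall>f\<in>F. bounded_linear f \<and> (\<exists>y. f y > 0)" "\<forall>x\<in>UNIV. x \<noteq> 0 \<longrightarrow> (\<exists>f\<in>F. f x \<noteq> 0)"
      using family[OF subspace_UNIV] apply (elim exE conjE) apply (rule that) by assumption+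
    define g0 where "g0 = (\<lambda>z. - (\<Sum>f\<in>F. f z))"
    have blg0: "bounded_linear g0"
      unfolding g0_def using F(3) by (intro bounded_linear_minus bounded_linear_sum) blast
    define G where "G = {g \<in> insert g0 F. \<exists>y. g y > 0}"
    have finG: "finite G" using F(1) by (simp add: G_def)
    have "card G \<le> card (insert g0 F)" using F(1) by (intro card_mono) (auto simp: G_def)
    also have "\<dots> \<le> card F + 1" using F(1) by (simp add: card_insert_if)
    finally have cG: "card G \<le> n + 1" using F(2) dimX by linarith
    have Gbl: "\<forall>g\<in>G. bounded_linear g \<and> (\<exists>y. g y > 0)" using F(3) blg0 by (auto simp: G_def)
    have pos: "\<exists>g\<in>G. g z > 0" if z: "z \<noteq> 0" for z
    proof (cases "\<exists>f\<in>F. f z > 0")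
      case True
      then obtain f where "f \<in> F" "f z > 0" by blast
      then have "f \<in> G" by (auto simp: G_def)
      then show ?thesis using \<open>f z > 0\<close> by blast
    next
      case False
      obtain f0 where f0: "f0 \<in> F" "f0 z \<noteq> 0" using F(4) z by blast
      then have f0n: "f0 z < 0" using False by force
      have "(\<Sum>f\<in>F. f z) = f0 z + (\<Sum>f\<in>F - {f0}. f z)" using F(1) f0(1) by (rule sum.remove)
      moreover have "(\<Sum>f\<in>F - {f0}. f z) \<le> 0" using False by (intro sum_nonpos) force
      ultimately have "g0 z > 0" unfolding g0_def using f0n by linarith
      then have "g0 \<in> G" by (auto simp: G_def)
      then show ?thesis using \<open>g0 z > 0\<close> by blast
    qed
    have "\<forall>g\<in>G. \<exists>c. norm c = 1 \<and> (\<forall>x. g x > 0 \<longrightarrow> (\<exists>s>0. norm (c - s *\<^sub>R x) < 1))"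
    proof
      fix g assume gG: "g \<in> G"
      have "bounded_linear g" "\<exists>y. g y > 0" using Gbl gG by auto
      then show "\<exists>c. norm c = 1 \<and> (\<forall>x. g x > 0 \<longrightarrow> (\<exists>s>0. norm (c - s *\<^sub>R x) < 1))"
        by (rule halfspace[OF finB spB sm])
    qed
    then have "\<exists>cc. \<forall>g\<in>G. norm (cc g) = 1 \<and> (\<forall>x. g x > 0 \<longrightarrow> (\<exists>s>0. norm (cc g - s *\<^sub>R x) < 1))"
      by (rule bchoice)
    then obtain cc where cc: "\<forall>g\<in>G. norm (cc g) = 1 \<and> (\<forall>x. g x > 0 \<longrightarrow> (\<exists>s>0. norm (cc g - s *\<^sub>R x) < 1))"
      by blast
    define U where "U j = (\<Union>g\<in>G. ball (real j *\<^sub>R cc g) (real j))" for j :: nat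
    have oU: "open (U j)" for j unfolding U_def by (intro open_UN) auto
    have cov: "K \<subseteq> (\<Union>j. U j)"
    proof
      fix z assume zK: "z \<in> K"
      obtain g where g: "g \<in> G" "g z > 0" using pos[OF Knz[OF zK]] by blast
      obtain s where s: "s > 0" "norm (cc g - s *\<^sub>R z) < 1" using cc g by blast
      define t where "t = 1 / s"
      have e: "t *\<^sub>R cc g - z = t *\<^sub>R (cc g - s *\<^sub>R z)" using s(1) by (simp add: t_def algebra_simps)
      have tp: "t > 0" using s(1) by (simp add: t_def)
      have "dist (t *\<^sub>R cc g) z = t * norm (cc g - s *\<^sub>R z)"
        unfolding dist_norm e by (simp only: norm_scaleR abs_of_pos[OF tp])
      also have "\<dots> < t" using s tp by (simp add: mult_less_cancel_left1 mult_less_cancel_left2)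
      finally have "dist (t *\<^sub>R cc g) z < t" .
      moreover have "t \<le> real (nat \<lceil>t\<rceil>)" by linarith
      moreover have "norm (cc g) = 1" using cc g(1) by blast
      ultimately have "dist (real (nat \<lceil>t\<rceil>) *\<^sub>R cc g) z < real (nat \<lceil>t\<rceil>)"
        using ball_mono_line by blast
      then have "z \<in> ball (real (nat \<lceil>t\<rceil>) *\<^sub>R cc g) (real (nat \<lceil>t\<rceil>))" by simp
      then have "z \<in> U (nat \<lceil>t\<rceil>)" unfolding U_def using g(1) by blast
      then show "z \<in> (\<Union>j. U j)" by blast
    qed
    obtain C' where C': "C' \<subseteq> UNIV" "finite C'" "K \<subseteq> (\<Union>j\<in>C'. U j)"
      using compactE_image[OF cK, of UNIV U] oU cov by blast
    define T where "T = Max (insert 1 C')"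
    have T1: "T \<ge> 1" using C'(2) by (simp add: T_def)
    have Tj: "j \<le> T" if "j \<in> C'" for j using C'(2) that by (simp add: T_def)
    define \<B> where "\<B> = (\<lambda>g. ball (real T *\<^sub>R cc g) (real T)) ` G"
    have bcB: "ball_covering \<B> A"
      unfolding ball_covering_def
    proof
      show "\<forall>Bl\<in>\<B>. \<exists>c r. Bl = ball c r \<and> 0 < r \<and> r \<le> norm c"
      proof
        fix Bl assume "Bl \<in> \<B>"
        then obtain g where g: "g \<in> G" "Bl = ball (real T *\<^sub>R cc g) (real T)" unfolding \<B>_def by blast
        have n1: "norm (cc g) = 1" using cc g(1) by blast
        have "norm (real T *\<^sub>R cc g) = real T" using n1 by simp
        moreover have "0 < real T" using T1 by simp
        ultimately show "\<exists>c r. Bl = ball c r \<and> 0 < r \<and> r \<le> norm c" using g(2) by force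
      qed
      show "A \<subseteq> \<Union>\<B>"
      proof
        fix z assume "z \<in> A"
        then have "z \<in> K" using AK by blast
        then obtain j where j: "j \<in> C'" "z \<in> U j" using C'(3) by blast
        then obtain g where g: "g \<in> G" "z \<in> ball (real j *\<^sub>R cc g) (real j)" unfolding U_def by blast
        have n1: "norm (cc g) = 1" using cc g(1) by blast
        have jT: "real j \<le> real T" using Tj[OF j(1)] by simp
        have "dist (real j *\<^sub>R cc g) z < real j" using g(2) by simp
        then have "dist (real T *\<^sub>R cc g) z < real T"
          by (rule ball_mono_line[OF n1 jT])
        then have "z \<in> ball (real T *\<^sub>R cc g) (real T)" by simp
        then show "z \<in> \<Union>\<B>" using g(1) unfolding \<B>_def by blast
      qed
    qed
    have finBB: "finite \<B>" using finG by (simp add: \<B>_def)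
    have cB: "card \<B> \<le> n + 1"
    proof -
      have "card \<B> \<le> card G" unfolding \<B>_def by (rule card_image_le[OF finG])
      then show ?thesis using cG by linarith
    qed
    have "\<not> (finite \<B> \<and> card \<B> \<le> n)" using partI bcB by blast
    then have "card \<B> = n + 1" using finBB cB by linarith
    then show "\<exists>\<B>. ball_covering \<B> A \<and> finite \<B> \<and> card \<B> = n + 1" using bcB finBB by blast
  qed
  show ?thesis using partI partII by blast
qed

end
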